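(* Let $D$ be a weakly connected digraph with $n>2$ nodes. Then the burning number of $D$ is at most $n-1$, and this bound is sharp: for every $n>2$ there is a weakly connected digraph with $n$ nodes whose burning number is $n-1$.
   Context: Burning process on a digraph $D$: a sequence $(x_1,\ldots,x_b)$ of nodes is a burning sequence for $D$ if after $b$ steps of the following process every node of $D$ is burned; the $i$-th step consists of first burning all out-neighbours of all currently burned nodes, and then burning the node $x_i$. The burning number of $D$ is the length of a shortest burning sequence. Equivalently, with $N^+_k(v)$ the set of nodes reachable from $v$ by a directed path with at most $k$ arcs, the burning number is the least $b$ such that there are nodes $v_1,\ldots,v_b$ with $V(D)=\bigcup_{i=1}^b N^+_{i-1}(v_i)$. *)

theory Defs
  imports "Graph_Theory.Digraph" "Graph_Theory.Digraph_Component"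
begin

definition out_ball :: "('a,'b) pre_digraph \<Rightarrow> nat \<Rightarrow> 'a \<Rightarrow> 'a set" where
  "out_ball G k v = {w. \<exists>j\<le>k. (v, w) \<in> (arcs_ends G) ^^ j}"

text \<open>A burning sequence (in the covering formulation): nodes v_1..v_b
(list index i = v_(i+1)) with V = union of N^+_(i-1)(v_i).\<close>
definition burning_seq :: "('a,'b) pre_digraph \<Rightarrow> 'a list \<Rightarrow> bool" where
  "burning_seq G xs \<longleftrightarrow> set xs \<subseteq> verts G \<and>
     verts G = (\<Union>i<length xs. out_ball G i (xs ! i))"

definition burning_number :: "('a,'b) pre_digraph \<Rightarrow> nat" where
  "burning_number G = (LEAST b. \<exists>xs. length xs = b \<and> burning_seq G xs)"

end

theory Submission
  imports Defs
begin

lemma rtrancl_Id_sub: "(a,b) \<in> R\<^sup>* \<Longrightarrow> R \<subseteq> Id \<Longrightarrow> a = b"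
  by (induct rule: rtrancl_induct) auto

lemma rtrancl_in_V: "(a,b) \<in> R\<^sup>* \<Longrightarrow> a \<in> V \<Longrightarrow> R \<subseteq> V \<times> V \<Longrightarrow> b \<in> V"
  by (induct rule: rtrancl_induct) auto

lemma out_ball_subset:
  assumes "wf_digraph G" "v \<in> verts G"
  shows "out_ball G k v \<subseteq> verts G"
proof
  fix w assume "w \<in> out_ball G k v"
  then obtain j where "(v,w) \<in> (arcs_ends G)^^j" unfolding out_ball_def by auto
  then have "(v,w) \<in> (arcs_ends G)\<^sup>*" by (rule relpow_imp_rtrancl)
  moreover have "arcs_ends G \<subseteq> verts G \<times> verts G"
    using assms(1) by (auto simp: arcs_ends_def arc_to_ends_def wf_digraph_def)
  ultimately show "w \<in> verts G" using assms(2) rtrancl_in_V by metis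
qed

lemma nonloop_arc:
  assumes "connected G" "a \<in> verts G" "b \<in> verts G" "a \<noteq> b"
  shows "\<exists>e\<in>arcs G. tail G e \<noteq> head G e"
proof (rule ccontr)
  assume "\<not> ?thesis"
  then have sub: "parcs (mk_symmetric G) \<subseteq> Id" by (auto simp: parcs_mk_symmetric)
  have "a \<rightarrow>\<^sup>*\<^bsub>mk_symmetric G\<^esub> b" using assms unfolding connected_def strongly_connected_def
    by auto
  then have "(a,b) \<in> (parcs (mk_symmetric G))\<^sup>*"
    unfolding reachable_def by (auto dest: rtrancl_on_rtranclI)
  then show False using sub rtrancl_Id_sub assms(4) by metis
qed

lemma ub_seq:
  assumes fd: "fin_digraph G" and c: "connected G" and n: "card (verts G) > 2"
  shows "\<exists>xs. length xs = card (verts G) - 1 \<and> burning_seq G xs"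
proof -
  have wf: "wf_digraph G" using fd by (simp add: fin_digraph_def)
  have fin: "finite (verts G)" using fd by (simp add: fin_digraph_def fin_digraph_axioms_def)
  obtain a b where ab: "a \<in> verts G" "b \<in> verts G" "a \<noteq> b"
  proof -
    have "card (verts G) \<ge> 2" using n by simp
    then obtain A where "A \<subseteq> verts G" "card A = 2" by (meson obtain_subset_with_card_n)
    then show ?thesis using that by (auto simp: card_2_iff)
  qed
  obtain e where e: "e \<in> arcs G" "tail G e \<noteq> head G e" using nonloop_arc[OF c ab] by blast
  define u where "u = tail G e"
  define w where "w = head G e"
  have uw: "u \<in> verts G" "w \<in> verts G" "u \<noteq> w"
    using e wf wf_digraph.tail_in_verts wf_digraph.head_in_verts unfolding u_def w_def by metis+
  define S where "S = verts G - {u,w}"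
  have finS: "finite S" using fin S_def by simp
  obtain ys where ys: "set ys = S" "distinct ys" using finite_distinct_list[OF finS] by blast
  define xs where "xs = ys @ [u]"
  have setys: "set ys = S" using ys by simp
  have lenys: "length ys = card (verts G) - 2"
    using uw fin ys distinct_card[of ys] by (simp add: S_def card_Diff_subset)
  have lenxs: "length xs = card (verts G) - 1" using lenys n by (simp add: xs_def)
  have xsu: "xs ! length ys = u" by (simp add: xs_def)
  have ge1: "length ys \<ge> 1" using lenys n by simp
  have "burning_seq G xs"
    unfolding burning_seq_def
  proof (intro conjI)
    have "S \<subseteq> verts G" unfolding S_def by blast
    then show "set xs \<subseteq> verts G" unfolding xs_def using setys uw(1) by simp
    show "verts G = (\<Union>i<length xs. out_ball G i (xs ! i))"
    proof
      show "verts G \<subseteq> (\<Union>i<length xs. out_ball G i (xs ! i))"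
      proof
        fix v assume v: "v \<in> verts G"
        show "v \<in> (\<Union>i<length xs. out_ball G i (xs ! i))"
        proof (cases "v \<in> S")
          case True
          then obtain i where i: "i < length ys" "ys ! i = v" using setys by (metis in_set_conv_nth)
          then have "xs ! i = v" by (simp add: xs_def nth_append)
          moreover have "v \<in> out_ball G i v" unfolding out_ball_def by (rule CollectI, rule exI[of _ 0]) simp
          ultimately have "v \<in> out_ball G i (xs ! i)" by simp
          moreover have "i \<in> {..<length xs}" using i by (simp add: xs_def)
          ultimately show ?thesis by blast
        next
          case False
          then have "v = u \<or> v = w" using v S_def by auto
          moreover have "u \<in> out_ball G (length ys) u" unfolding out_ball_def
            by (rule CollectI, rule exI[of _ 0]) simp
          moreover have "w \<in> out_ball G (length ys) u" unfolding out_ball_def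
            apply (rule CollectI, rule exI[of _ 1])
            using ge1 e by (auto simp: u_def w_def arcs_ends_def arc_to_ends_def)
          ultimately have "v \<in> out_ball G (length ys) (xs ! length ys)" using xsu by auto
          moreover have "length ys \<in> {..<length xs}" by (simp add: xs_def)
          ultimately show ?thesis by blast
        qed
      qed
      show "(\<Union>i<length xs. out_ball G i (xs ! i)) \<subseteq> verts G"
      proof (intro UN_least)
        fix i assume "i \<in> {..<length xs}"
        then have "xs ! i \<in> verts G" using \<open>set xs \<subseteq> verts G\<close> by (auto dest: nth_mem)
        then show "out_ball G i (xs ! i) \<subseteq> verts G" using out_ball_subset[OF wf] by blast
      qed
    qed
  qed
  then show ?thesis using lenxs by blast
qed

lemma ub:
  assumes "fin_digraph G" "connected G" "card (verts G) > 2"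
  shows "burning_number G \<le> card (verts G) - 1"
  using ub_seq[OF assms] unfolding burning_number_def by (auto intro: Least_le)

definition star :: "nat \<Rightarrow> (nat,nat) pre_digraph" where
  "star n = \<lparr>verts = {0..<n}, arcs = {1..<n}, tail = id, head = (\<lambda>_. 0)\<rparr>"

lemma star_fin: "n > 0 \<Longrightarrow> fin_digraph (star n)"
  by (auto simp: star_def fin_digraph_def fin_digraph_axioms_def wf_digraph_def)

lemma star_loopfree: "loopfree_digraph (star n)"
  by (auto simp: star_def loopfree_digraph_def loopfree_digraph_axioms_def wf_digraph_def)

lemma star_nomulti: "nomulti_digraph (star n)"
  by (auto simp: star_def nomulti_digraph_def nomulti_digraph_axioms_def wf_digraph_def
      arc_to_ends_def)

lemma star_connected:
  assumes "n > 0" shows "connected (star n)"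
proof -
  let ?R = "parcs (mk_symmetric (star n))"
  let ?F = "{0..<n}"
  have to0: "(u,0) \<in> rtrancl_on ?F ?R" if "u < n" for u
  proof (cases "u = 0")
    case True then show ?thesis using assms by simp
  next
    case False
    have "(u,0) \<in> ?R" using False that by (auto simp: parcs_mk_symmetric star_def)
    moreover have "(0,0) \<in> rtrancl_on ?F ?R" using assms by simp
    moreover have "u \<in> ?F" using that by simp
    ultimately show ?thesis by (rule converse_rtrancl_on_into_rtrancl_on)
  qed
  have from0: "(0,u) \<in> rtrancl_on ?F ?R" if "u < n" for u
  proof (cases "u = 0")
    case True then show ?thesis using assms by simp
  next
    case False
    have "(0,u) \<in> ?R" using False that by (auto simp: parcs_mk_symmetric star_def)
    moreover have "(0,0) \<in> rtrancl_on ?F ?R" using assms by simp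
    moreover have "u \<in> ?F" using that by simp
    ultimately show ?thesis by (metis rtrancl_on_into_rtrancl_on)
  qed
  have vs: "verts (with_proj (mk_symmetric (star n))) = ?F" by (simp add: star_def)
  show ?thesis
    unfolding connected_def strongly_connected_def
  proof (intro conjI ballI)
    show "verts (with_proj (mk_symmetric (star n))) \<noteq> {}" using vs assms by auto
  next
    fix u v assume "u \<in> verts (with_proj (mk_symmetric (star n)))" "v \<in> verts (with_proj (mk_symmetric (star n)))"
    then have uv: "u < n" "v < n" using vs by auto
    have "(u,v) \<in> rtrancl_on ?F ?R" by (rule rtrancl_on_trans[OF to0[OF uv(1)] from0[OF uv(2)]])
    then show "u \<rightarrow>\<^sup>*\<^bsub>with_proj (mk_symmetric (star n))\<^esub> v"
      unfolding reachable_def vs by simp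
  qed
qed

lemma star_lb:
  assumes "burning_seq (star n) xs"
  shows "n - 1 \<le> length xs"
proof -
  have "{1..<n} \<subseteq> set xs"
  proof
    fix v assume v: "v \<in> {1..<n}"
    then have "v \<in> verts (star n)" by (simp add: star_def)
    then obtain i where i: "i < length xs" "v \<in> out_ball (star n) i (xs ! i)"
      using assms unfolding burning_seq_def by blast
    then obtain j where j: "(xs ! i, v) \<in> (arcs_ends (star n))^^j" unfolding out_ball_def by auto
    have "xs ! i = v"
    proof (cases j)
      case 0 then show ?thesis using j by simp
    next
      case (Suc k)
      then obtain z where "(z, v) \<in> arcs_ends (star n)" using j by auto
      then have "v = 0" by (auto simp: arcs_ends_def arc_to_ends_def star_def)
      then show ?thesis using v by simp
    qed
    then show "v \<in> set xs" using i by auto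
  qed
  then have "card {1..<n} \<le> card (set xs)" by (intro card_mono) auto
  also have "\<dots> \<le> length xs" by (rule card_length)
  finally show ?thesis by simp
qed

theorem mainTheorem2:
  shows "(\<forall>G :: ('a,'b) pre_digraph. fin_digraph G \<and> connected G \<and> card (verts G) > 2
            \<longrightarrow> burning_number G \<le> card (verts G) - 1)
    \<and> (\<forall>n::nat. n > 2 \<longrightarrow> (\<exists>G :: (nat,nat) pre_digraph.
            fin_digraph G \<and> loopfree_digraph G \<and> nomulti_digraph G \<and> connected G
            \<and> card (verts G) = n \<and> burning_number G = n - 1))"
proof (intro conjI allI impI)
  fix G :: "('a,'b) pre_digraph"
  assume "fin_digraph G \<and> connected G \<and> card (verts G) > 2"
  then show "burning_number G \<le> card (verts G) - 1" using ub by blast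
next
  fix n :: nat assume n: "n > 2"
  have card: "card (verts (star n)) = n" by (simp add: star_def)
  have fd: "fin_digraph (star n)" using n star_fin by simp
  have c: "connected (star n)" using n star_connected by simp
  have le: "burning_number (star n) \<le> n - 1" using ub[OF fd c] card n by simp
  obtain xs where "length xs = card (verts (star n)) - 1" "burning_seq (star n) xs"
    using ub_seq[OF fd c] card n by auto
  then have ex: "\<exists>b xs. length xs = b \<and> burning_seq (star n) xs" by blast
  have "\<exists>xs. length xs = burning_number (star n) \<and> burning_seq (star n) xs"
    unfolding burning_number_def by (rule LeastI_ex[OF ex])
  then obtain ys where "length ys = burning_number (star n)" "burning_seq (star n) ys" by blast
  then have "n - 1 \<le> burning_number (star n)" using star_lb by metis
  with le have "burning_number (star n) = n - 1" by simp
  then show "\<exists>G :: (nat,nat) pre_digraph.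
            fin_digraph G \<and> loopfree_digraph G \<and> nomulti_digraph G \<and> connected G
            \<and> card (verts G) = n \<and> burning_number G = n - 1"
    using fd star_loopfree star_nomulti c card by blast
qed

end
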